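(* Let $\Omega\subset\mathbb{R}^N$ ($N\ge3$) be a bounded domain with smooth boundary, $2^*=\frac{2N}{N-2}$, $\alpha,\beta>1$, $1<q<2<\alpha+\beta<2^*$, $\lambda,\mu>0$, $a,b,c,h_1,h_2:\Omega\to\mathbb{R}$ continuous with $a,c\in L^{\frac{\alpha+\beta}{\alpha+\beta-q}}(\Omega)$ and $h_1,h_2\in L^2(\Omega)$, and $\phi_1,\phi_2:[0,+\infty)\to\mathbb{R}$ continuous. Assume $(\phi_1)$ and $(B)$ hold. Then there exists $(\omega_1,\omega_2)\in W$ with $\|(\omega_1,\omega_2)\|>\rho_{\lambda,\mu}$ and $J_{\lambda,\mu}(\omega_1,\omega_2)<0$, where $\rho_{\lambda,\mu}=t_{\lambda,\mu}$.
   Context: $\Phi_i(s)=\int_0^s\phi_i(\tau)\,d\tau$ ($i=1,2$). $(\phi_1)$: there are constants $0<\rho_0\le\rho_1$ with $\rho_0\le\phi_i(s)\le\rho_1$ for all $s\ge0$, $i=1,2$. $(B)$: $b\in L^\infty(\Omega)$ and $b>0$ on some nonempty open $\Omega_1\subset\Omega$. $W=H_0^1(\Omega)\times H_0^1(\Omega)$ with norm $\|(u,v)\|=\left(\int_\Omega(|\nabla u|^2+|\nabla v|^2)dx\right)^{1/2}$; $\|\cdot\|_p$ is the $L^p(\Omega)$ norm; $S_i$ ($1<i<2^*$) is the smallest constant with $\|u\|_i\le S_i\|\nabla u\|_2$ on $H_0^1(\Omega)$. $J_{\lambda,\mu}(u,v)=\int_\Omega\left[\Phi_1\left(\frac{u^2+|\nabla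 u|^2}{2}\right)+\Phi_2\left(\frac{v^2+|\nabla v|^2}{2}\right)\right]dx-\frac1q\int_\Omega(\lambda a|u|^q+\mu c|v|^q)dx-\frac{1}{\alpha+\beta}\int_\Omega b|u|^\alpha|v|^\beta dx-\int_\Omega h_1u\,dx-\int_\Omega h_2v\,dx$. $K=\max\{\|a\|_{\frac{\alpha+\beta}{\alpha+\beta-q}},\|c\|_{\frac{\alpha+\beta}{\alpha+\beta-q}}\}$, $\alpha_0=\frac{(2-q)(\alpha+\beta)K}{q(\alpha+\beta-2)\|b\|_\infty S_{\alpha+\beta}^{\alpha+\beta-q}}$, $t_{\lambda,\mu}=(\lambda+\mu)^{\frac{1}{\alpha+\beta-q}}\alpha_0^{\frac{1}{\alpha+\beta-q}}$. *)

theory Defs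
  imports "HOL-Analysis.Analysis" "HOL-Probability.Essential_Supremum"
begin

definition smooth_on :: "'a::euclidean_space set \<Rightarrow> ('a \<Rightarrow> real) \<Rightarrow> bool" where
  "smooth_on U f \<longleftrightarrow> (\<exists>F. f \<in> F \<and>
     (\<forall>g\<in>F. continuous_on U g \<and>
        (\<forall>i\<in>Basis. \<exists>g'\<in>F. \<forall>x\<in>U.
            ((\<lambda>t. g (x + t *\<^sub>R i)) has_real_derivative g' x) (at 0))))"

definition grad :: "('a::euclidean_space \<Rightarrow> real) \<Rightarrow> 'a \<Rightarrow> 'a" where
  "grad f x = (\<Sum>i\<in>Basis. frechet_derivative f (at x) i *\<^sub>R i)"

definition smooth_bounded_domain :: "'a::euclidean_space set \<Rightarrow> bool" where
  "smooth_bounded_domain \<Omega> \<longleftrightarrow> open \<Omega> \<and> connected \<Omega> \<and> bounded \<Omega> \<and> \<Omega> \<noteq> {} \<and>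
     (\<forall>x\<in>frontier \<Omega>. \<exists>U r. open U \<and> x \<in> U \<and> smooth_on U r \<and>
        \<Omega> \<inter> U = {y\<in>U. r y < 0} \<and> grad r x \<noteq> 0)"

definition test_functions :: "'a::euclidean_space set \<Rightarrow> ('a \<Rightarrow> real) set" where
  "test_functions \<Omega> = {\<phi>. smooth_on UNIV \<phi> \<and> compact (closure {x. \<phi> x \<noteq> 0}) \<and>
                                closure {x. \<phi> x \<noteq> 0} \<subseteq> \<Omega>}"

text \<open>H_0^1(Omega): closure of the test functions in the H^1 norm. An element is represented
  as a pair (u, g) of the function and its (weak) gradient.\<close>
definition H01 :: "'a::euclidean_space set \<Rightarrow> (('a \<Rightarrow> real) \<times> ('a \<Rightarrow> 'a)) set" where
  "H01 \<Omega> = {(u, g). u \<in> borel_measurable lebesgue \<and> g \<in> borel_measurable lebesgue \<and>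
     (\<exists>\<phi>::nat \<Rightarrow> 'a \<Rightarrow> real. (\<forall>n. \<phi> n \<in> test_functions \<Omega>) \<and>
        ((\<lambda>n. \<integral>\<^sup>+ x. ennreal ((\<phi> n x - u x)\<^sup>2 + (norm (grad (\<phi> n) x - g x))\<^sup>2) \<partial>lebesgue)
           \<longlonglongrightarrow> 0))}"

definition Lp_norm :: "'a::euclidean_space set \<Rightarrow> real \<Rightarrow> ('a \<Rightarrow> real) \<Rightarrow> real" where
  "Lp_norm \<Omega> p f = (\<integral>x\<in>\<Omega>. \<bar>f x\<bar> powr p \<partial>lebesgue) powr (1 / p)"

definition in_Lp :: "'a::euclidean_space set \<Rightarrow> real \<Rightarrow> ('a \<Rightarrow> real) \<Rightarrow> bool" where
  "in_Lp \<Omega> p f \<longleftrightarrow> f \<in> borel_measurable (lebesgue_on \<Omega>) \<and>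
      set_integrable lebesgue \<Omega> (\<lambda>x. \<bar>f x\<bar> powr p)"

definition Linf_norm :: "'a::euclidean_space set \<Rightarrow> ('a \<Rightarrow> real) \<Rightarrow> real" where
  "Linf_norm \<Omega> f = real_of_ereal (esssup (lebesgue_on \<Omega>) (\<lambda>x. ereal \<bar>f x\<bar>))"

definition in_Linf :: "'a::euclidean_space set \<Rightarrow> ('a \<Rightarrow> real) \<Rightarrow> bool" where
  "in_Linf \<Omega> f \<longleftrightarrow> f \<in> borel_measurable (lebesgue_on \<Omega>) \<and>
      esssup (lebesgue_on \<Omega>) (\<lambda>x. ereal \<bar>f x\<bar>) < \<infinity>"

definition W_norm :: "'a::euclidean_space set \<Rightarrow> ('a \<Rightarrow> 'a) \<Rightarrow> ('a \<Rightarrow> 'a) \<Rightarrow> real" where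
  "W_norm \<Omega> gu gv = sqrt (\<integral>x\<in>\<Omega>. (norm (gu x))\<^sup>2 + (norm (gv x))\<^sup>2 \<partial>lebesgue)"

definition sobolev_const :: "'a::euclidean_space set \<Rightarrow> real \<Rightarrow> real" where
  "sobolev_const \<Omega> i = Inf {S. \<forall>(u, g)\<in>H01 \<Omega>.
      Lp_norm \<Omega> i u \<le> S * sqrt (\<integral>x\<in>\<Omega>. (norm (g x))\<^sup>2 \<partial>lebesgue)}"

definition Phi :: "(real \<Rightarrow> real) \<Rightarrow> real \<Rightarrow> real" where
  "Phi \<phi> s = integral {0..s} \<phi>"

definition J_fun :: "'a::euclidean_space set \<Rightarrow> (real \<Rightarrow> real) \<Rightarrow> (real \<Rightarrow> real) \<Rightarrow>
    real \<Rightarrow> real \<Rightarrow> real \<Rightarrow> real \<Rightarrow> real \<Rightarrow>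
    ('a \<Rightarrow> real) \<Rightarrow> ('a \<Rightarrow> real) \<Rightarrow> ('a \<Rightarrow> real) \<Rightarrow> ('a \<Rightarrow> real) \<Rightarrow> ('a \<Rightarrow> real) \<Rightarrow>
    ('a \<Rightarrow> real) \<Rightarrow> ('a \<Rightarrow> 'a) \<Rightarrow> ('a \<Rightarrow> real) \<Rightarrow> ('a \<Rightarrow> 'a) \<Rightarrow> real" where
  "J_fun \<Omega> \<phi>1 \<phi>2 q \<alpha> \<beta> lam mu a b c h1 h2 u gu v gv =
     (\<integral>x\<in>\<Omega>. Phi \<phi>1 (((u x)\<^sup>2 + (norm (gu x))\<^sup>2) / 2) + Phi \<phi>2 (((v x)\<^sup>2 + (norm (gv x))\<^sup>2) / 2) \<partial>lebesgue)
     - (1 / q) * (\<integral>x\<in>\<Omega>. lam * a x * \<bar>u x\<bar> powr q + mu * c x * \<bar>v x\<bar> powr q \<partial>lebesgue)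
     - (1 / (\<alpha> + \<beta>)) * (\<integral>x\<in>\<Omega>. b x * \<bar>u x\<bar> powr \<alpha> * \<bar>v x\<bar> powr \<beta> \<partial>lebesgue)
     - (\<integral>x\<in>\<Omega>. h1 x * u x \<partial>lebesgue)
     - (\<integral>x\<in>\<Omega>. h2 x * v x \<partial>lebesgue)"

end

theory Submission
  imports Defs "HOL-Computational_Algebra.Polynomial" "HOL-Real_Asymp.Real_Asymp"
begin

definition Gf :: "real poly \<Rightarrow> nat \<Rightarrow> real \<Rightarrow> real" where
  "Gf P k s = (if 0 < s \<and> s < 1 then poly P s / (s * (1 - s)) ^ k * exp (- 1 / (s * (1 - s))) else 0)"

definition Dp :: "real poly \<Rightarrow> nat \<Rightarrow> real poly" where
  "Dp P k = pderiv P * [:0,1,-1:]^2 - smult (of_nat k) (P * [:1,-2:] * [:0,1,-1:]) + P * [:1,-2:]"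

lemma Gf_aux_lim:
  "((\<lambda>s::real. (1 / (s * (1 - s))) ^ k * exp (- (1 / (s * (1 - s))))) \<longlongrightarrow> 0) (at_right 0)"
  "((\<lambda>s::real. (1 / (s * (1 - s))) ^ k * exp (- (1 / (s * (1 - s))))) \<longlongrightarrow> 0) (at_left 1)"
proof -
  have e: "((\<lambda>z::real. z ^ k * exp (- z)) \<longlongrightarrow> 0) at_top"
    using tendsto_power_div_exp_0[of k] by (simp add: exp_minus field_simps)
  have f1: "filterlim (\<lambda>s::real. 1 / (s * (1 - s))) at_top (at_right 0)" by real_asymp
  have f2: "filterlim (\<lambda>s::real. 1 / (s * (1 - s))) at_top (at_left 1)" by real_asymp
  show "((\<lambda>s::real. (1 / (s * (1 - s))) ^ k * exp (- (1 / (s * (1 - s))))) \<longlongrightarrow> 0) (at_right 0)"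
    by (rule filterlim_compose[OF e f1])
  show "((\<lambda>s::real. (1 / (s * (1 - s))) ^ k * exp (- (1 / (s * (1 - s))))) \<longlongrightarrow> 0) (at_left 1)"
    by (rule filterlim_compose[OF e f2])
qed

lemma Gf_lim: "(Gf P k \<longlongrightarrow> 0) (at_right 0)" "(Gf P k \<longlongrightarrow> 0) (at_left 1)"
proof -
  have ev0: "\<forall>\<^sub>F s in at_right 0. poly P s * ((1 / (s * (1 - s))) ^ k * exp (- (1 / (s * (1 - s))))) = Gf P k s"
    using eventually_at_right_real[of 0 "1::real", OF zero_less_one] 
    by eventually_elim (auto simp: Gf_def field_simps power_one_over)
  have ev1: "\<forall>\<^sub>F s in at_left 1. poly P s * ((1 / (s * (1 - s))) ^ k * exp (- (1 / (s * (1 - s))))) = Gf P k s"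
    using eventually_at_left_real[of 0 "1::real", OF zero_less_one] 
    by eventually_elim (auto simp: Gf_def field_simps power_one_over)
  have p0: "(poly P \<longlongrightarrow> poly P 0) (at_right 0)" by (intro tendsto_intros)
  have p1: "(poly P \<longlongrightarrow> poly P 1) (at_left 1)" by (intro tendsto_intros)
  show "(Gf P k \<longlongrightarrow> 0) (at_right 0)"
    using Lim_transform_eventually[OF tendsto_mult[OF p0 Gf_aux_lim(1)] ev0] by simp
  show "(Gf P k \<longlongrightarrow> 0) (at_left 1)"
    using Lim_transform_eventually[OF tendsto_mult[OF p1 Gf_aux_lim(2)] ev1] by simp
qed

lemma Gf_deriv_int:
  assumes s: "0 < s" "s < 1"
  shows "(Gf P k has_real_derivative Gf (Dp P k) (k+2) s) (at s)"
proof -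
  define w where "w = s * (1 - s)"
  have w: "w > 0" using s by (simp add: w_def)
  have d1: "((\<lambda>t. t * (1 - t)) has_real_derivative (1 - 2 * s)) (at s)"
    by (auto intro!: derivative_eq_intros)
  have d2: "((\<lambda>t. inverse (t * (1 - t))) has_real_derivative - ((1 - 2 * s) * inverse (w ^ 2))) (at s)"
    using DERIV_inverse_fun[OF d1] w s unfolding w_def by (simp add: power2_eq_square)
  have d3: "((\<lambda>t. inverse (t * (1 - t)) ^ k) has_real_derivative
        of_nat k * (- ((1 - 2 * s) * inverse (w ^ 2)) * inverse w ^ (k - Suc 0))) (at s)"
    using DERIV_power[OF d2, of k] unfolding w_def by simp
  have d4: "((\<lambda>t. exp (- inverse (t * (1 - t)))) has_real_derivative
        exp (- inverse w) * ((1 - 2 * s) * inverse (w ^ 2))) (at s)"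
    using DERIV_fun_exp[OF DERIV_minus[OF d2]] unfolding w_def by simp
  note d5 = DERIV_mult[OF DERIV_mult[OF poly_DERIV[of P s] d3] d4]
  have eq: "(poly (pderiv P) s * inverse w ^ k + of_nat k * (- ((1 - 2 * s) * inverse (w ^ 2)) * inverse w ^ (k - Suc 0)) * poly P s) *
      exp (- inverse w) + exp (- inverse w) * ((1 - 2 * s) * inverse (w ^ 2)) * (poly P s * inverse w ^ k)
      = Gf (Dp P k) (k+2) s"
  proof -
    have G: "Gf (Dp P k) (k+2) s = (poly (pderiv P) s * w^2 - of_nat k * poly P s * (1 - 2 * s) * w + poly P s * (1 - 2 * s)) / w^(k+2) * exp (- inverse w)"
      using s unfolding Gf_def Dp_def w_def by (simp add: algebra_simps power2_eq_square divide_inverse)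
    show ?thesis
    proof (cases k)
      case 0
      then show ?thesis unfolding G using w
        by (simp add: field_simps power2_eq_square)
    next
      case (Suc m)
      then show ?thesis unfolding G using w
        by (simp add: field_simps power2_eq_square)
    qed
  qed
  have d6: "((\<lambda>t. poly P t * inverse (t * (1 - t)) ^ k * exp (- inverse (t * (1 - t)))) has_real_derivative Gf (Dp P k) (k+2) s) (at s)"
    using DERIV_cong[OF d5[unfolded w_def] eq[unfolded w_def]] .
  show ?thesis
    apply (rule has_field_derivative_transform_within_open[OF d6, of "{0<..<1}"])
    using s by (auto simp: Gf_def divide_inverse power_inverse power_mult_distrib)
qed

lemma Gf_out: "s \<le> 0 \<or> 1 \<le> s \<Longrightarrow> Gf P k s = 0"
  by (auto simp: Gf_def)

lemma Gf_deriv: "(Gf P k has_real_derivative Gf (Dp P k) (k+2) s) (at s)"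
proof -
  consider "s < 0" | "s = 0" | "0 < s \<and> s < 1" | "s = 1" | "1 < s" by linarith
  then show ?thesis
  proof cases
    case 1
    show ?thesis
      by (rule has_field_derivative_transform_within_open[of "\<lambda>_. 0" _ _ "{..<0}"])
         (use 1 in \<open>auto simp: Gf_def\<close>)
  next
    case 5
    show ?thesis
      by (rule has_field_derivative_transform_within_open[of "\<lambda>_. 0" _ _ "{1<..}"])
         (use 5 in \<open>auto simp: Gf_def\<close>)
  next
    case 3 then show ?thesis using Gf_deriv_int by auto
  next
    case 2
    have "((\<lambda>y. (Gf P k y - Gf P k 0) / (y - 0)) \<longlongrightarrow> 0) (at 0)"
    proof (rule filterlim_split_at)
      have "\<forall>\<^sub>F y in at_left (0::real). y < 0" by (simp add: eventually_at_filter)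
      then have "\<forall>\<^sub>F y in at_left (0::real). 0 = (Gf P k y - Gf P k 0) / (y - 0)"
        by eventually_elim (auto simp: Gf_def)
      then show "((\<lambda>y. (Gf P k y - Gf P k 0) / (y - 0)) \<longlongrightarrow> 0) (at_left 0)"
        by (rule Lim_transform_eventually[OF tendsto_const])
      have "\<forall>\<^sub>F y in at_right (0::real). y \<in> {0<..<1}"
        by (rule eventually_at_right_real) simp
      then have "\<forall>\<^sub>F y in at_right (0::real). Gf (P * [:1,-1:]) (k+1) y = (Gf P k y - Gf P k 0) / (y - 0)"
        by eventually_elim (auto simp: Gf_def field_simps)
      then show "((\<lambda>y. (Gf P k y - Gf P k 0) / (y - 0)) \<longlongrightarrow> 0) (at_right 0)"
        by (rule Lim_transform_eventually[OF Gf_lim(1)])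
    qed
    then show ?thesis using 2 by (simp add: has_field_derivative_iff Gf_def)
  next
    case 4
    have "((\<lambda>y. (Gf P k y - Gf P k 1) / (y - 1)) \<longlongrightarrow> 0) (at 1)"
    proof (rule filterlim_split_at)
      have "\<forall>\<^sub>F y in at_right (1::real). y > 1" by (simp add: eventually_at_filter)
      then have "\<forall>\<^sub>F y in at_right (1::real). 0 = (Gf P k y - Gf P k 1) / (y - 1)"
        by eventually_elim (auto simp: Gf_def)
      then show "((\<lambda>y. (Gf P k y - Gf P k 1) / (y - 1)) \<longlongrightarrow> 0) (at_right 1)"
        by (rule Lim_transform_eventually[OF tendsto_const])
      have "\<forall>\<^sub>F y in at_left (1::real). y \<in> {0<..<1}"
        by (rule eventually_at_left_real) simp
      then have "\<forall>\<^sub>F y in at_left (1::real). Gf (P * [:0,-1:]) (k+1) y = (Gf P k y - Gf P k 1) / (y - 1)"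
        by eventually_elim (auto simp: Gf_def field_simps)
      then show "((\<lambda>y. (Gf P k y - Gf P k 1) / (y - 1)) \<longlongrightarrow> 0) (at_left 1)"
        by (rule Lim_transform_eventually[OF Gf_lim(2)])
    qed
    then show ?thesis using 4 by (simp add: has_field_derivative_iff Gf_def)
  qed
qed

lemma Gf_cont: "isCont (Gf P k) s"
  using Gf_deriv DERIV_isCont by blast

lemma Gf_smult: "Gf (smult a P) k s = a * Gf P k s"
  by (simp add: Gf_def)

definition Fm :: "'a::euclidean_space \<Rightarrow> real \<Rightarrow> real \<Rightarrow> ('a \<Rightarrow> real poly) \<Rightarrow> ('a \<Rightarrow> nat) \<Rightarrow> 'a \<Rightarrow> real" where
  "Fm c \<delta> C P k x = C * (\<Prod>i\<in>Basis. Gf (P i) (k i) ((x \<bullet> i - c \<bullet> i) / \<delta>))"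

definition Fd :: "'a::euclidean_space \<Rightarrow> real \<Rightarrow> real \<Rightarrow> ('a \<Rightarrow> real poly) \<Rightarrow> ('a \<Rightarrow> nat) \<Rightarrow> 'a \<Rightarrow> 'a \<Rightarrow> real" where
  "Fd c \<delta> C P k j = Fm c \<delta> (C / \<delta>) (P(j := Dp (P j) (k j))) (k(j := k j + 2))"

lemma Fm_dir:
  fixes c :: "'a::euclidean_space"
  assumes j: "j \<in> Basis" and d: "\<delta> \<noteq> 0"
  shows "((\<lambda>t. Fm c \<delta> C P k (x + t *\<^sub>R j)) has_real_derivative Fd c \<delta> C P k j x) (at 0)"
proof -
  define R where "R = (\<Prod>i\<in>Basis - {j}. Gf (P i) (k i) ((x \<bullet> i - c \<bullet> i) / \<delta>))"
  have eq: "Fm c \<delta> C P k (x + t *\<^sub>R j) = C * Gf (P j) (k j) ((x \<bullet> j + t - c \<bullet> j) / \<delta>) * R" for t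
  proof -
    have "(\<Prod>i\<in>Basis. Gf (P i) (k i) (((x + t *\<^sub>R j) \<bullet> i - c \<bullet> i) / \<delta>)) =
       Gf (P j) (k j) (((x + t *\<^sub>R j) \<bullet> j - c \<bullet> j) / \<delta>) * (\<Prod>i\<in>Basis - {j}. Gf (P i) (k i) (((x + t *\<^sub>R j) \<bullet> i - c \<bullet> i) / \<delta>))"
      using j by (simp add: prod.remove)
    also have "(\<Prod>i\<in>Basis - {j}. Gf (P i) (k i) (((x + t *\<^sub>R j) \<bullet> i - c \<bullet> i) / \<delta>)) = R"
      unfolding R_def using j by (intro prod.cong) (auto simp: inner_add_left inner_Basis)
    finally show ?thesis using j by (simp add: Fm_def inner_add_left)
  qed
  have e2: "Fd c \<delta> C P k j x = C * (Gf (Dp (P j) (k j)) (k j + 2) ((x \<bullet> j + 0 - c \<bullet> j) / \<delta>) * (1 / \<delta>)) * R"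
  proof -
    have "(\<Prod>i\<in>Basis. Gf ((P(j := Dp (P j) (k j))) i) ((k(j := k j + 2)) i) ((x \<bullet> i - c \<bullet> i) / \<delta>)) =
        Gf (Dp (P j) (k j)) (k j + 2) ((x \<bullet> j - c \<bullet> j) / \<delta>) * R"
      unfolding R_def using j by (simp add: prod.remove)
    then show ?thesis by (simp add: Fd_def Fm_def)
  qed
  have d0: "((\<lambda>t. Gf (P j) (k j) ((x \<bullet> j + t - c \<bullet> j) / \<delta>)) has_real_derivative
          Gf (Dp (P j) (k j)) (k j + 2) ((x \<bullet> j + 0 - c \<bullet> j) / \<delta>) * (1 / \<delta>)) (at 0)"
    by (rule DERIV_chain2[OF Gf_deriv]) (use d in \<open>auto intro!: derivative_eq_intros\<close>)
  have "((\<lambda>t. C * Gf (P j) (k j) ((x \<bullet> j + t - c \<bullet> j) / \<delta>) * R) has_real_derivative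
          C * (Gf (Dp (P j) (k j)) (k j + 2) ((x \<bullet> j + 0 - c \<bullet> j) / \<delta>) * (1 / \<delta>)) * R) (at 0)"
    using DERIV_cmult_right[OF DERIV_cmult[OF d0, of C], of R] by simp
  then show ?thesis unfolding eq e2 .
qed

lemma Fm_has_derivative:
  fixes c :: "'a::euclidean_space"
  assumes d: "\<delta> \<noteq> 0"
  shows "\<exists>D. (Fm c \<delta> C P k has_derivative D) (at x)"
proof -
  have di: "((\<lambda>x. Gf (P i) (k i) ((x \<bullet> i - c \<bullet> i) / \<delta>)) has_derivative
      (\<lambda>h. (h \<bullet> i / \<delta>) * Gf (Dp (P i) (k i)) (k i + 2) ((x \<bullet> i - c \<bullet> i) / \<delta>))) (at x)" for i
    by (rule DERIV_compose_FDERIV[OF Gf_deriv]) (use d in \<open>auto intro!: derivative_eq_intros\<close>)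
  show ?thesis unfolding Fm_def
    by (rule exI, rule has_derivative_mult[OF has_derivative_const], rule has_derivative_prod, rule di)
qed

lemma Fm_cont: "\<delta> \<noteq> 0 \<Longrightarrow> continuous_on UNIV (Fm c \<delta> C P k)"
proof -
  assume d: "\<delta> \<noteq> 0"
  have "isCont (Fm c \<delta> C P k) x" for x
    using Fm_has_derivative[OF d, of c C P k x]
    by (meson differentiable_def differentiable_imp_continuous_within)
  then show ?thesis by (simp add: continuous_at_imp_continuous_on)
qed

lemma Fm_smooth:
  fixes c :: "'a::euclidean_space"
  assumes d: "\<delta> \<noteq> 0"
  shows "smooth_on UNIV (Fm c \<delta> C P k)"
  unfolding smooth_on_def
proof (intro exI[of _ "{Fm c \<delta> C P k | C P k. True}"] conjI ballI)
  fix g assume "g \<in> {Fm c \<delta> C P k | C P k. True}"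
  then obtain C P k where g: "g = Fm c \<delta> C P k" by auto
  show "continuous_on UNIV g" unfolding g by (rule Fm_cont[OF d])
  fix i :: 'a assume i: "i \<in> Basis"
  show "\<exists>g'\<in>{Fm c \<delta> C P k | C P k. True}. \<forall>x\<in>UNIV. ((\<lambda>t. g (x + t *\<^sub>R i)) has_real_derivative g' x) (at 0)"
    using Fm_dir[OF i d] unfolding g Fd_def by blast
qed auto

lemma Fm_grad:
  fixes c :: "'a::euclidean_space"
  assumes d: "\<delta> \<noteq> 0"
  shows "grad (Fm c \<delta> C P k) x = (\<Sum>j\<in>Basis. Fd c \<delta> C P k j x *\<^sub>R j)"
proof -
  obtain D where D: "(Fm c \<delta> C P k has_derivative D) (at x)"
    using Fm_has_derivative[OF d] by blast
  have fd: "frechet_derivative (Fm c \<delta> C P k) (at x) = D" using frechet_derivative_at[OF D] by simp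
  have lin: "linear D" using D has_derivative_linear by blast
  have "D j = Fd c \<delta> C P k j x" if j: "j \<in> Basis" for j
  proof -
    have h1: "((\<lambda>t::real. x + t *\<^sub>R j) has_derivative (\<lambda>t. t *\<^sub>R j)) (at 0)"
      by (auto intro!: derivative_eq_intros)
    have D': "(Fm c \<delta> C P k has_derivative D) (at ((\<lambda>t::real. x + t *\<^sub>R j) 0))" using D by simp
    have "((\<lambda>t. Fm c \<delta> C P k (x + t *\<^sub>R j)) has_derivative (\<lambda>t. D (t *\<^sub>R j))) (at 0)"
      using has_derivative_compose[OF h1 D'] by simp
    moreover have "(\<lambda>t. D (t *\<^sub>R j)) = (*) (D j)"
      using linear_scale[OF lin] by (auto simp: fun_eq_iff mult.commute)
    ultimately have "((\<lambda>t. Fm c \<delta> C P k (x + t *\<^sub>R j)) has_real_derivative D j) (at 0)"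
      by (simp add: has_field_derivative_def)
    then show ?thesis using Fm_dir[OF j d] DERIV_unique by blast
  qed
  then show ?thesis unfolding grad_def fd by simp
qed

lemma Fm_zero:
  fixes c :: "'a::euclidean_space"
  assumes d: "\<delta> > 0"
  assumes x: "x \<notin> box c (\<Sum>i\<in>Basis. (c \<bullet> i + \<delta>) *\<^sub>R i)"
  shows "Fm c \<delta> C P k x = 0"
proof -
  obtain i where i: "i \<in> Basis" "\<not> (c \<bullet> i < x \<bullet> i \<and> x \<bullet> i < c \<bullet> i + \<delta>)"
    using x by (auto simp: mem_box)
  have "\<not> (0 < (x \<bullet> i - c \<bullet> i) / \<delta> \<and> (x \<bullet> i - c \<bullet> i) / \<delta> < 1)"
    using i(2) d by (auto simp: field_simps)
  then have "Gf (P i) (k i) ((x \<bullet> i - c \<bullet> i) / \<delta>) = 0" by (auto simp: Gf_def)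
  then show ?thesis unfolding Fm_def using i(1) by (auto intro!: prod_zero)
qed

lemma Fm_scale: "Fm c \<delta> C P k x = C * Fm c \<delta> 1 P k x"
  by (simp add: Fm_def)

lemma Fd_scale: "Fd c \<delta> C P k j x = C * Fd c \<delta> 1 P k j x"
  by (simp add: Fd_def Fm_def)

lemma meas_cont: "continuous_on UNIV f \<Longrightarrow> f \<in> borel_measurable lebesgue"
  by (simp add: borel_measurable_continuous_onI measurable_completion)

lemma integral_mult_const: "integral S (\<lambda>x. c * f x) = c * integral S (f :: 'a::euclidean_space \<Rightarrow> real)"
  using integral_cmul[of S c f] by simp

lemma INT_K:
  fixes f :: "'a::euclidean_space \<Rightarrow> real"
  assumes K: "K = cbox l r" "K \<subseteq> \<Omega>" and fc: "continuous_on K f" and z: "\<And>x. x \<notin> K \<Longrightarrow> f x = 0"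
  shows "(LINT x:\<Omega>|lebesgue. f x) = integral K f"
proof -
  have eq: "(\<lambda>x. indicator \<Omega> x *\<^sub>R f x) = (\<lambda>x. indicator K x *\<^sub>R f x)"
    using K z by (auto simp: fun_eq_iff indicator_def)
  have "set_integrable lebesgue K f"
    using absolutely_integrable_continuous[of l r f] fc K by simp
  then have "(LINT x:K|lebesgue. f x) = integral K f" by (rule set_lebesgue_integral_eq_integral)
  then show ?thesis unfolding set_lebesgue_integral_def eq .
qed

lemma Phi_le:
  assumes "continuous_on {0..} \<phi>" "\<forall>s\<ge>0. \<phi> s \<le> \<rho>1" "y \<ge> 0"
  shows "Phi \<phi> y \<le> \<rho>1 * y"
proof -
  have "continuous_on {0..y} \<phi>" using assms(1) by (rule continuous_on_subset) auto
  then have "\<phi> integrable_on {0..y}" using integrable_continuous_real by blast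
  then have "integral {0..y} \<phi> \<le> integral {0..y} (\<lambda>_. \<rho>1)"
    using assms by (intro integral_le) auto
  then show ?thesis using assms(3) by (simp add: Phi_def mult.commute)
qed

lemma Phi_cont:
  assumes "continuous_on {0..} \<phi>"
  shows "continuous_on {0..M} (Phi \<phi>)"
proof -
  have "continuous_on {0..M} \<phi>" using assms by (rule continuous_on_subset) auto
  then have "\<phi> integrable_on {0..M}" using integrable_continuous_real by blast
  then show ?thesis unfolding Phi_def[abs_def] by (rule indefinite_integral_continuous_1)
qed

lemma Phi_0: "Phi \<phi> 0 = 0" by (simp add: Phi_def)

lemma real_ev:
  fixes A B D C p q e T :: real
  assumes "C > 0" "p > 2" "1 < q" "q < 2" "e > 0"
  shows "\<exists>s>0. s * e > T \<and> s\<^sup>2 * A + s powr q * B + s * D - s powr p * C < 0"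
proof -
  define M where "M = \<bar>A\<bar> + \<bar>B\<bar> + \<bar>D\<bar>"
  define s where "s = max (max 1 (\<bar>T\<bar> / e + 1)) (((M + 1) / C) powr (1 / (p - 2)))"
  have s1: "s \<ge> 1" by (simp add: s_def)
  have sT: "s * e > T"
  proof -
    have "s \<ge> \<bar>T\<bar> / e + 1" by (simp add: s_def)
    then have "s * e \<ge> (\<bar>T\<bar> / e + 1) * e" using assms(5) by (intro mult_right_mono) auto
    moreover have "(\<bar>T\<bar> / e + 1) * e = \<bar>T\<bar> + e" using assms(5) by (simp add: field_simps)
    ultimately show ?thesis using assms(5) by linarith
  qed
  have sq: "s powr q \<le> s\<^sup>2"
  proof -
    have "s powr q \<le> s powr 2" using s1 assms by (intro powr_mono) auto
    also have "s powr 2 = s\<^sup>2" using s1 by (simp add: powr_numeral)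
    finally show ?thesis .
  qed
  have "s powr (p - 2) \<ge> (((M + 1) / C) powr (1 / (p - 2))) powr (p - 2)"
    using assms by (intro powr_mono2) (auto simp: s_def intro: max.coboundedI2)
  also have "(((M + 1) / C) powr (1 / (p - 2))) powr (p - 2) = (M + 1) / C"
    using assms by (simp add: powr_powr M_def)
  finally have sp: "s powr (p - 2) * C \<ge> M + 1" using assms by (simp add: field_simps)
  have spp: "s powr p = s\<^sup>2 * s powr (p - 2)"
  proof -
    have "s powr p = s powr (2 + (p - 2))" by simp
    also have "\<dots> = s powr 2 * s powr (p - 2)" by (rule powr_add)
    also have "s powr 2 = s\<^sup>2" using s1 by (simp add: powr_numeral)
    finally show ?thesis .
  qed
  have "s\<^sup>2 * A + s powr q * B + s * D \<le> s\<^sup>2 * \<bar>A\<bar> + s\<^sup>2 * \<bar>B\<bar> + s\<^sup>2 * \<bar>D\<bar>"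
  proof -
    have "s\<^sup>2 * A \<le> s\<^sup>2 * \<bar>A\<bar>" by (intro mult_left_mono) auto
    moreover have "s powr q * B \<le> s\<^sup>2 * \<bar>B\<bar>"
    proof -
      have "s powr q * B \<le> s powr q * \<bar>B\<bar>" by (intro mult_left_mono) auto
      also have "\<dots> \<le> s\<^sup>2 * \<bar>B\<bar>" using sq by (intro mult_right_mono) auto
      finally show ?thesis .
    qed
    moreover have "s * D \<le> s\<^sup>2 * \<bar>D\<bar>"
    proof -
      have "s * D \<le> s * \<bar>D\<bar>" using s1 by (intro mult_left_mono) auto
      also have "\<dots> \<le> s\<^sup>2 * \<bar>D\<bar>" using s1 by (intro mult_right_mono) (auto simp: power2_eq_square)
      finally show ?thesis .
    qed
    ultimately show ?thesis by linarith
  qed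
  also have "\<dots> = s\<^sup>2 * M" by (simp add: M_def algebra_simps)
  also have "\<dots> < s\<^sup>2 * (s powr (p - 2) * C)" using sp s1 by (intro mult_strict_left_mono) auto
  also have "\<dots> = s powr p * C" using spp by simp
  finally show ?thesis using sT s1 by (intro exI[of _ s]) auto
qed

lemma J_est:
  fixes \<Omega> K :: "'a::euclidean_space set" and \<psi> :: "'a \<Rightarrow> real" and g\<psi> :: "'a \<Rightarrow> 'a"
  assumes K: "K = cbox l r" "K \<subseteq> \<Omega>" "box l r \<noteq> {}"
    and \<psi>c: "continuous_on UNIV \<psi>" and gc: "continuous_on UNIV g\<psi>"
    and z: "\<And>x. x \<notin> K \<Longrightarrow> \<psi> x = 0 \<and> g\<psi> x = 0"
    and bpos: "\<And>x. x \<in> K \<Longrightarrow> b x > 0"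
    and m1: "m1 \<in> K" "\<psi> m1 \<noteq> 0" and m2: "m2 \<in> K" "g\<psi> m2 \<noteq> 0"
    and ab: "\<alpha> > 0" "\<beta> > 0"
    and q: "1 < q" "q < 2" "2 < \<alpha> + \<beta>"
    and cont: "continuous_on \<Omega> a" "continuous_on \<Omega> b" "continuous_on \<Omega> c"
              "continuous_on \<Omega> h1" "continuous_on \<Omega> h2"
    and phicont: "continuous_on {0..} \<phi>1" "continuous_on {0..} \<phi>2"
    and phib: "\<forall>s\<ge>0. \<phi>1 s \<le> \<rho>1" "\<forall>s\<ge>0. \<phi>2 s \<le> \<rho>1"
  shows "\<exists>s>0. W_norm \<Omega> (\<lambda>x. s *\<^sub>R g\<psi> x) (\<lambda>x. s *\<^sub>R g\<psi> x) > T \<and>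
     J_fun \<Omega> \<phi>1 \<phi>2 q \<alpha> \<beta> lam mu a b c h1 h2 (\<lambda>x. s * \<psi> x) (\<lambda>x. s *\<^sub>R g\<psi> x) (\<lambda>x. s * \<psi> x) (\<lambda>x. s *\<^sub>R g\<psi> x) < 0"
proof -
  have aK: "continuous_on K a" and bK: "continuous_on K b" and cK: "continuous_on K c"
    and h1K: "continuous_on K h1" and h2K: "continuous_on K h2"
    using cont K(2) continuous_on_subset by blast+
  have \<psi>K: "continuous_on K \<psi>" and gK: "continuous_on K g\<psi>"
    using \<psi>c gc continuous_on_subset by blast+
  have aps: "continuous_on K (\<lambda>x. \<bar>\<psi> x\<bar> powr e)" if "e > 0" for e
    using that by (intro continuous_on_powr' continuous_intros \<psi>K) auto
  define E where "E = integral K (\<lambda>x. (norm (g\<psi> x))\<^sup>2)"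
  define C0 where "C0 = integral K (\<lambda>x. b x * \<bar>\<psi> x\<bar> powr \<alpha> * \<bar>\<psi> x\<bar> powr \<beta>)"
  define A where "A = integral K (\<lambda>x. \<rho>1 * ((\<psi> x)\<^sup>2 + (norm (g\<psi> x))\<^sup>2))"
  define B where "B = integral K (\<lambda>x. lam * a x * \<bar>\<psi> x\<bar> powr q + mu * c x * \<bar>\<psi> x\<bar> powr q)"
  define D1 where "D1 = integral K (\<lambda>x. h1 x * \<psi> x)"
  define D2 where "D2 = integral K (\<lambda>x. h2 x * \<psi> x)"
  have Ecn: "continuous_on K (\<lambda>x. (norm (g\<psi> x))\<^sup>2)" by (intro continuous_intros gK)
  have E0: "E > 0"
  proof -
    have "E \<ge> 0" using Ecn unfolding E_def K(1) by (intro integral_nonneg integrable_continuous) auto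
    moreover have "E \<noteq> 0"
      using integral_cbox_eq_0_iff[of l r "\<lambda>x. (norm (g\<psi> x))\<^sup>2"] Ecn K m2 by (auto simp: E_def)
    ultimately show ?thesis by simp
  qed
  have Ccn: "continuous_on K (\<lambda>x. b x * \<bar>\<psi> x\<bar> powr \<alpha> * \<bar>\<psi> x\<bar> powr \<beta>)"
    using ab by (intro continuous_intros bK aps)
  have Cnn: "x \<in> K \<Longrightarrow> 0 \<le> b x * \<bar>\<psi> x\<bar> powr \<alpha> * \<bar>\<psi> x\<bar> powr \<beta>" for x
    using bpos[of x] by auto
  have C0: "C0 > 0"
  proof -
    have "C0 \<ge> 0" using Ccn Cnn unfolding C0_def K(1) by (intro integral_nonneg integrable_continuous) auto
    moreover have "b m1 * \<bar>\<psi> m1\<bar> powr \<alpha> * \<bar>\<psi> m1\<bar> powr \<beta> \<noteq> 0" using m1 bpos[of m1] by auto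
    then have "C0 \<noteq> 0"
      using integral_cbox_eq_0_iff[of l r "\<lambda>x. b x * \<bar>\<psi> x\<bar> powr \<alpha> * \<bar>\<psi> x\<bar> powr \<beta>"] Ccn K m1 Cnn
      by (auto simp: C0_def)
    ultimately show ?thesis by simp
  qed
  obtain s where s: "s > 0" "s * sqrt (2 * E) > T"
    "s\<^sup>2 * A + s powr q * (- B / q) + s * (- (D1 + D2)) - s powr (\<alpha> + \<beta>) * (C0 / (\<alpha> + \<beta>)) < 0"
    using real_ev[of "C0 / (\<alpha> + \<beta>)" "\<alpha> + \<beta>" q "sqrt (2 * E)" T A "- B / q" "- (D1 + D2)"] C0 q E0 ab
    by auto
  define u where "u = (\<lambda>x. s * \<psi> x)"
  define gu where "gu = (\<lambda>x. s *\<^sub>R g\<psi> x)"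
  have uz: "\<And>x. x \<notin> K \<Longrightarrow> u x = 0 \<and> gu x = 0" using z by (simp add: u_def gu_def)
  have uK: "continuous_on K u" unfolding u_def by (intro continuous_intros \<psi>K)
  have guK: "continuous_on K gu" unfolding gu_def by (intro continuous_intros gK)
  have ngu: "(norm (gu x))\<^sup>2 = s\<^sup>2 * (norm (g\<psi> x))\<^sup>2" for x
    using s(1) by (simp add: gu_def power_mult_distrib)
  have "(LINT x:\<Omega>|lebesgue. (norm (gu x))\<^sup>2 + (norm (gu x))\<^sup>2) = integral K (\<lambda>x. (norm (gu x))\<^sup>2 + (norm (gu x))\<^sup>2)"
    by (rule INT_K[OF K(1,2)]) (auto intro!: continuous_intros guK dest: uz)
  also have "\<dots> = integral K (\<lambda>x. (2 * s\<^sup>2) * (norm (g\<psi> x))\<^sup>2)" unfolding ngu by simp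
  also have "\<dots> = s\<^sup>2 * (2 * E)" unfolding integral_mult_const E_def by simp
  finally have Wi: "(LINT x:\<Omega>|lebesgue. (norm (gu x))\<^sup>2 + (norm (gu x))\<^sup>2) = s\<^sup>2 * (2 * E)" .
  have W: "W_norm \<Omega> gu gu = s * sqrt (2 * E)"
    unfolding W_norm_def Wi using s(1) by (simp add: real_sqrt_mult)
  define Q where "Q = (\<lambda>x. ((u x)\<^sup>2 + (norm (gu x))\<^sup>2) / 2)"
  have QK: "continuous_on K Q" unfolding Q_def by (intro continuous_intros uK guK) auto
  have Q0: "Q x \<ge> 0" for x by (simp add: Q_def)
  obtain xm where xm: "xm \<in> K" "\<And>y. y \<in> K \<Longrightarrow> Q y \<le> Q xm"
    using continuous_attains_sup[OF _ _ QK] K m1 by (metis compact_cbox empty_iff)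
  have QKs: "Q ` K \<subseteq> {0..Q xm}" using xm Q0 by auto
  define f1 where "f1 = (\<lambda>x. Phi \<phi>1 (Q x) + Phi \<phi>2 (Q x))"
  have f1K: "continuous_on K f1" unfolding f1_def
    by (intro continuous_on_add continuous_on_compose2[OF Phi_cont[OF phicont(1)] QK QKs]
        continuous_on_compose2[OF Phi_cont[OF phicont(2)] QK QKs])
  have "(LINT x:\<Omega>|lebesgue. f1 x) = integral K f1"
    by (rule INT_K[OF K(1,2) f1K]) (auto simp: f1_def Q_def Phi_0 dest: uz)
  also have "\<dots> \<le> integral K (\<lambda>x. s\<^sup>2 * (\<rho>1 * ((\<psi> x)\<^sup>2 + (norm (g\<psi> x))\<^sup>2)))"
  proof (rule integral_le)
    show "f1 integrable_on K" using f1K K(1) integrable_continuous by blast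
    show "(\<lambda>x. s\<^sup>2 * (\<rho>1 * ((\<psi> x)\<^sup>2 + (norm (g\<psi> x))\<^sup>2))) integrable_on K"
      unfolding K(1) by (intro integrable_continuous continuous_intros \<psi>K[unfolded K(1)] gK[unfolded K(1)])
    fix x assume "x \<in> K"
    have "Phi \<phi>1 (Q x) \<le> \<rho>1 * Q x" by (rule Phi_le[OF phicont(1) phib(1) Q0])
    moreover have "Phi \<phi>2 (Q x) \<le> \<rho>1 * Q x" by (rule Phi_le[OF phicont(2) phib(2) Q0])
    moreover have "2 * (\<rho>1 * Q x) = s\<^sup>2 * (\<rho>1 * ((\<psi> x)\<^sup>2 + (norm (g\<psi> x))\<^sup>2))"
      unfolding Q_def ngu by (simp add: u_def power_mult_distrib algebra_simps)
    ultimately show "f1 x \<le> s\<^sup>2 * (\<rho>1 * ((\<psi> x)\<^sup>2 + (norm (g\<psi> x))\<^sup>2))" unfolding f1_def by linarith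
  qed
  also have "\<dots> = s\<^sup>2 * A" unfolding integral_mult_const A_def ..
  finally have T1: "(LINT x:\<Omega>|lebesgue. f1 x) \<le> s\<^sup>2 * A" .
  have upow: "\<bar>u x\<bar> powr e = s powr e * \<bar>\<psi> x\<bar> powr e" for x e
    using s(1) by (simp add: u_def abs_mult powr_mult)
  have "(LINT x:\<Omega>|lebesgue. lam * a x * \<bar>u x\<bar> powr q + mu * c x * \<bar>u x\<bar> powr q)
      = integral K (\<lambda>x. lam * a x * \<bar>u x\<bar> powr q + mu * c x * \<bar>u x\<bar> powr q)"
    apply (rule INT_K[OF K(1,2)])
    unfolding upow using q by (auto intro!: continuous_intros aK cK aps dest: z)
  also have "\<dots> = s powr q * B" unfolding upow B_def integral_mult_const[symmetric]
    by (simp add: algebra_simps)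
  finally have T2: "(LINT x:\<Omega>|lebesgue. lam * a x * \<bar>u x\<bar> powr q + mu * c x * \<bar>u x\<bar> powr q) = s powr q * B" .
  have "(LINT x:\<Omega>|lebesgue. b x * \<bar>u x\<bar> powr \<alpha> * \<bar>u x\<bar> powr \<beta>)
      = integral K (\<lambda>x. b x * \<bar>u x\<bar> powr \<alpha> * \<bar>u x\<bar> powr \<beta>)"
    apply (rule INT_K[OF K(1,2)])
    unfolding upow using ab by (auto intro!: continuous_intros bK aps dest: z)
  also have "\<dots> = s powr (\<alpha> + \<beta>) * C0" unfolding upow C0_def integral_mult_const[symmetric]
    by (simp add: algebra_simps powr_add)
  finally have T3: "(LINT x:\<Omega>|lebesgue. b x * \<bar>u x\<bar> powr \<alpha> * \<bar>u x\<bar> powr \<beta>) = s powr (\<alpha> + \<beta>) * C0" .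
  have "(LINT x:\<Omega>|lebesgue. h1 x * u x) = integral K (\<lambda>x. h1 x * u x)"
    by (rule INT_K[OF K(1,2)]) (auto intro!: continuous_intros h1K uK dest: uz)
  also have "\<dots> = s * D1" unfolding u_def D1_def integral_mult_const[symmetric]
    by (simp add: algebra_simps)
  finally have T4: "(LINT x:\<Omega>|lebesgue. h1 x * u x) = s * D1" .
  have "(LINT x:\<Omega>|lebesgue. h2 x * u x) = integral K (\<lambda>x. h2 x * u x)"
    by (rule INT_K[OF K(1,2)]) (auto intro!: continuous_intros h2K uK dest: uz)
  also have "\<dots> = s * D2" unfolding u_def D2_def integral_mult_const[symmetric]
    by (simp add: algebra_simps)
  finally have T5: "(LINT x:\<Omega>|lebesgue. h2 x * u x) = s * D2" .
  have J: "J_fun \<Omega> \<phi>1 \<phi>2 q \<alpha> \<beta> lam mu a b c h1 h2 u gu u gu =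
     (LINT x:\<Omega>|lebesgue. f1 x) - (1 / q) * (s powr q * B) - (1 / (\<alpha> + \<beta>)) * (s powr (\<alpha> + \<beta>) * C0)
       - s * D1 - s * D2"
    unfolding J_fun_def T2[symmetric] T3[symmetric] T4[symmetric] T5[symmetric]
    by (simp add: f1_def Q_def)
  have "J_fun \<Omega> \<phi>1 \<phi>2 q \<alpha> \<beta> lam mu a b c h1 h2 u gu u gu < 0"
    unfolding J using T1 s(3) by (simp add: field_simps)
  then show ?thesis using W s unfolding u_def gu_def by auto
qed

lemma test_Fm:
  fixes c :: "'a::euclidean_space"
  assumes d: "\<delta> > 0" and K: "cbox c (\<Sum>i\<in>Basis. (c \<bullet> i + \<delta>) *\<^sub>R i) \<subseteq> \<Omega>"
  shows "Fm c \<delta> C P k \<in> test_functions \<Omega>"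
proof -
  let ?K = "cbox c (\<Sum>i\<in>Basis. (c \<bullet> i + \<delta>) *\<^sub>R i)"
  have sub: "{x. Fm c \<delta> C P k x \<noteq> 0} \<subseteq> ?K"
    using Fm_zero[OF d, of _ c C P k] box_subset_cbox by blast
  then have cl: "closure {x. Fm c \<delta> C P k x \<noteq> 0} \<subseteq> ?K"
    by (intro closure_minimal) auto
  have "bounded {x. Fm c \<delta> C P k x \<noteq> 0}" using sub bounded_cbox bounded_subset by blast
  then show ?thesis unfolding test_functions_def using Fm_smooth[of \<delta> c C P k] d cl K by auto
qed

lemma H01_Fm:
  fixes c :: "'a::euclidean_space"
  assumes d: "\<delta> > 0" and K: "cbox c (\<Sum>i\<in>Basis. (c \<bullet> i + \<delta>) *\<^sub>R i) \<subseteq> \<Omega>"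
  shows "(Fm c \<delta> C P k, grad (Fm c \<delta> C P k)) \<in> H01 \<Omega>"
proof -
  have gr: "grad (Fm c \<delta> C P k) = (\<lambda>x. \<Sum>j\<in>Basis. Fd c \<delta> C P k j x *\<^sub>R j)"
    using Fm_grad[of \<delta>] d by (auto simp: fun_eq_iff)
  have m1: "Fm c \<delta> C P k \<in> borel_measurable lebesgue" by (rule meas_cont[OF Fm_cont]) (use d in auto)
  have "continuous_on UNIV (\<lambda>x. \<Sum>j\<in>Basis. Fd c \<delta> C P k j x *\<^sub>R j)"
    unfolding Fd_def using d by (intro continuous_intros Fm_cont) auto
  then have m2: "grad (Fm c \<delta> C P k) \<in> borel_measurable lebesgue" unfolding gr by (rule meas_cont)
  show ?thesis unfolding H01_def
    using m1 m2 test_Fm[OF d K, of C P k]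
    by (auto intro!: exI[of _ "\<lambda>n. Fm c \<delta> C P k"])
qed

theorem lemma3p3:
  fixes \<Omega> :: "'a::euclidean_space set"
    and \<alpha> \<beta> q lam mu \<rho>0 \<rho>1 :: real
    and a b c h1 h2 :: "'a \<Rightarrow> real"
    and \<phi>1 \<phi>2 :: "real \<Rightarrow> real"
  assumes dim: "DIM('a) \<ge> 3"
    and dom: "smooth_bounded_domain \<Omega>"
    and ab: "\<alpha> > 1" "\<beta> > 1"
    and q: "1 < q" "q < 2" "2 < \<alpha> + \<beta>"
    and crit: "\<alpha> + \<beta> < 2 * real DIM('a) / (real DIM('a) - 2)"
    and lm: "lam > 0" "mu > 0"
    and cont: "continuous_on \<Omega> a" "continuous_on \<Omega> b" "continuous_on \<Omega> c"
              "continuous_on \<Omega> h1" "continuous_on \<Omega> h2"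
    and aL: "in_Lp \<Omega> ((\<alpha> + \<beta>) / (\<alpha> + \<beta> - q)) a"
    and cL: "in_Lp \<Omega> ((\<alpha> + \<beta>) / (\<alpha> + \<beta> - q)) c"
    and hL: "in_Lp \<Omega> 2 h1" "in_Lp \<Omega> 2 h2"
    and phicont: "continuous_on {0..} \<phi>1" "continuous_on {0..} \<phi>2"
    and phi1: "0 < \<rho>0" "\<rho>0 \<le> \<rho>1"
      "\<forall>s\<ge>0. \<rho>0 \<le> \<phi>1 s \<and> \<phi>1 s \<le> \<rho>1" "\<forall>s\<ge>0. \<rho>0 \<le> \<phi>2 s \<and> \<phi>2 s \<le> \<rho>1"
    and B: "in_Linf \<Omega> b" "\<exists>\<Omega>1. open \<Omega>1 \<and> \<Omega>1 \<noteq> {} \<and> \<Omega>1 \<subseteq> \<Omega> \<and> (\<forall>x\<in>\<Omega>1. b x > 0)"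
  shows "let K = max (Lp_norm \<Omega> ((\<alpha> + \<beta>) / (\<alpha> + \<beta> - q)) a)
                     (Lp_norm \<Omega> ((\<alpha> + \<beta>) / (\<alpha> + \<beta> - q)) c);
             \<alpha>0 = ((2 - q) * (\<alpha> + \<beta>) * K) /
                  (q * (\<alpha> + \<beta> - 2) * Linf_norm \<Omega> b * sobolev_const \<Omega> (\<alpha> + \<beta>) powr (\<alpha> + \<beta> - q));
             t = (lam + mu) powr (1 / (\<alpha> + \<beta> - q)) * \<alpha>0 powr (1 / (\<alpha> + \<beta> - q))
         in \<exists>\<omega>1 g1 \<omega>2 g2. (\<omega>1, g1) \<in> H01 \<Omega> \<and> (\<omega>2, g2) \<in> H01 \<Omega> \<and>
              W_norm \<Omega> g1 g2 > t \<and>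
              J_fun \<Omega> \<phi>1 \<phi>2 q \<alpha> \<beta> lam mu a b c h1 h2 \<omega>1 g1 \<omega>2 g2 < 0"
proof -
  obtain \<Omega>1 where O1: "open \<Omega>1" "\<Omega>1 \<noteq> {}" "\<Omega>1 \<subseteq> \<Omega>" "\<forall>x\<in>\<Omega>1. b x > 0" using B(2) by blast
  obtain x1 where x1: "x1 \<in> \<Omega>1" using O1(2) by blast
  obtain r where r: "r > 0" "ball x1 r \<subseteq> \<Omega>1" using O1(1) x1 open_contains_ball by blast
  define n where "n = real DIM('a)"
  have n: "n \<ge> 1" unfolding n_def by (simp add: DIM_positive Suc_le_eq)
  define \<delta> where "\<delta> = r / (2 * n)"
  have d: "\<delta> > 0" using r n by (simp add: \<delta>_def)
  define dd where "dd = (\<Sum>i\<in>Basis. (x1 \<bullet> i + \<delta>) *\<^sub>R i)"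
  define K where "K = cbox x1 dd"
  have Kball: "K \<subseteq> ball x1 r"
  proof
    fix x assume "x \<in> K"
    then have xi: "\<And>i. i \<in> Basis \<Longrightarrow> x1 \<bullet> i \<le> x \<bullet> i \<and> x \<bullet> i \<le> x1 \<bullet> i + \<delta>"
      by (auto simp: K_def dd_def mem_box)
    have "dist x1 x = norm (x - x1)" by (simp add: dist_norm norm_minus_commute)
    also have "\<dots> \<le> (\<Sum>i\<in>Basis. \<bar>(x - x1) \<bullet> i\<bar>)" by (rule norm_le_l1)
    also have "\<dots> \<le> (\<Sum>i\<in>(Basis::'a set). \<delta>)"
    proof (intro sum_mono)
      fix i :: 'a assume "i \<in> Basis"
      then show "\<bar>(x - x1) \<bullet> i\<bar> \<le> \<delta>" using xi[of i] by (simp add: inner_diff_left)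
    qed
    also have "\<dots> = n * \<delta>" by (simp add: n_def)
    also have "\<dots> < r" using r n by (simp add: \<delta>_def)
    finally show "x \<in> ball x1 r" by simp
  qed
  have KO1: "K \<subseteq> \<Omega>1" using Kball r by auto
  have KO: "K \<subseteq> \<Omega>" using KO1 O1 by auto
  have bne: "box x1 dd \<noteq> {}" using d by (simp add: box_ne_empty dd_def)
  define P0 where "P0 = (\<lambda>_::'a. (1::real poly))"
  define k0 where "k0 = (\<lambda>_::'a. (0::nat))"
  define \<psi> where "\<psi> = Fm x1 \<delta> 1 P0 k0"
  define g\<psi> where "g\<psi> = (\<lambda>x. \<Sum>j\<in>Basis. Fd x1 \<delta> 1 P0 k0 j x *\<^sub>R j)"
  have \<psi>c: "continuous_on UNIV \<psi>" unfolding \<psi>_def using d by (intro Fm_cont) auto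
  have gc: "continuous_on UNIV g\<psi>" unfolding g\<psi>_def Fd_def using d by (intro continuous_intros Fm_cont) auto
  have z: "\<psi> x = 0 \<and> g\<psi> x = 0" if "x \<notin> K" for x
  proof -
    have "x \<notin> box x1 dd" using that box_subset_cbox K_def by blast
    then have "\<And>C P k. Fm x1 \<delta> C P k x = 0" using Fm_zero[OF d] unfolding dd_def by blast
    then show ?thesis unfolding \<psi>_def g\<psi>_def Fd_def by simp
  qed
  define m1 where "m1 = (\<Sum>i\<in>Basis. (x1 \<bullet> i + \<delta> / 2) *\<^sub>R i)"
  have m1K: "m1 \<in> K" using d by (auto simp: m1_def K_def dd_def mem_box)
  have "\<psi> m1 > 0" unfolding \<psi>_def Fm_def using d
    by (auto intro!: prod_pos simp: m1_def Gf_def P0_def k0_def)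
  then have m1: "\<psi> m1 \<noteq> 0" by simp
  define m2 where "m2 = (\<Sum>i\<in>Basis. (x1 \<bullet> i + \<delta> / 4) *\<^sub>R i)"
  have m2K: "m2 \<in> K" using d by (auto simp: m2_def K_def dd_def mem_box)
  obtain j :: 'a where j: "j \<in> Basis" using nonempty_Basis by blast
  have "g\<psi> m2 \<bullet> j = Fd x1 \<delta> 1 P0 k0 j m2" unfolding g\<psi>_def using j by simp
  also have "\<dots> > 0"
  proof -
    have "Gf ((P0(j := Dp (P0 j) (k0 j))) i) ((k0(j := k0 j + 2)) i) ((m2 \<bullet> i - x1 \<bullet> i) / \<delta>) > 0"
      if i: "i \<in> Basis" for i
    proof (cases "i = j")
      case True
      then show ?thesis using d i by (simp add: m2_def Gf_def P0_def k0_def Dp_def)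
    next
      case False
      then show ?thesis using d i by (simp add: m2_def Gf_def P0_def k0_def)
    qed
    then have "0 < (\<Prod>i\<in>Basis. Gf ((P0(j := Dp (P0 j) (k0 j))) i) ((k0(j := k0 j + 2)) i) ((m2 \<bullet> i - x1 \<bullet> i) / \<delta>))"
      by (rule prod_pos)
    then show ?thesis unfolding Fd_def Fm_def using d by simp
  qed
  finally have m2: "g\<psi> m2 \<noteq> 0" by auto
  have bpos: "\<And>x. x \<in> K \<Longrightarrow> b x > 0" using KO1 O1(4) by auto
  define t where "t = (let K = max (Lp_norm \<Omega> ((\<alpha> + \<beta>) / (\<alpha> + \<beta> - q)) a)
                     (Lp_norm \<Omega> ((\<alpha> + \<beta>) / (\<alpha> + \<beta> - q)) c);
             \<alpha>0 = ((2 - q) * (\<alpha> + \<beta>) * K) /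
                  (q * (\<alpha> + \<beta> - 2) * Linf_norm \<Omega> b * sobolev_const \<Omega> (\<alpha> + \<beta>) powr (\<alpha> + \<beta> - q))
         in (lam + mu) powr (1 / (\<alpha> + \<beta> - q)) * \<alpha>0 powr (1 / (\<alpha> + \<beta> - q)))"
  obtain s where s: "s > 0" "W_norm \<Omega> (\<lambda>x. s *\<^sub>R g\<psi> x) (\<lambda>x. s *\<^sub>R g\<psi> x) > t"
    "J_fun \<Omega> \<phi>1 \<phi>2 q \<alpha> \<beta> lam mu a b c h1 h2 (\<lambda>x. s * \<psi> x) (\<lambda>x. s *\<^sub>R g\<psi> x) (\<lambda>x. s * \<psi> x) (\<lambda>x. s *\<^sub>R g\<psi> x) < 0"
    using J_est[OF K_def KO bne \<psi>c gc z bpos m1K m1 m2K m2 _ _ q cont phicont, of \<rho>1 t lam mu] ab phi1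
    by auto
  have eqf: "Fm x1 \<delta> s P0 k0 = (\<lambda>x. s * \<psi> x)" unfolding \<psi>_def by (simp add: fun_eq_iff Fm_scale[of _ _ s])
  have eqg: "grad (Fm x1 \<delta> s P0 k0) = (\<lambda>x. s *\<^sub>R g\<psi> x)"
  proof
    fix x
    have "grad (Fm x1 \<delta> s P0 k0) x = (\<Sum>j\<in>Basis. Fd x1 \<delta> s P0 k0 j x *\<^sub>R j)"
      by (rule Fm_grad) (use d in auto)
    also have "\<dots> = s *\<^sub>R g\<psi> x" unfolding g\<psi>_def scaleR_sum_right
      by (rule sum.cong) (auto simp: Fd_scale[of _ _ s])
    finally show "grad (Fm x1 \<delta> s P0 k0) x = s *\<^sub>R g\<psi> x" .
  qed
  have H0: "(Fm x1 \<delta> s P0 k0, grad (Fm x1 \<delta> s P0 k0)) \<in> H01 \<Omega>"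
    by (rule H01_Fm[OF d]) (use KO in \<open>simp add: K_def dd_def\<close>)
  have H1: "(Fm x1 \<delta> s P0 k0, (\<lambda>x. s *\<^sub>R g\<psi> x)) \<in> H01 \<Omega>" using H0 unfolding eqg .
  have H: "((\<lambda>x. s * \<psi> x), (\<lambda>x. s *\<^sub>R g\<psi> x)) \<in> H01 \<Omega>" using H1 unfolding eqf .
  show ?thesis unfolding Let_def
    using H s unfolding t_def Let_def by blast
qed

end
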